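(* Let $\mu$ be a density on $[q]^n$ with $H_\infty(\mu)\ge(n-t)\log q$. Then there exists a partition $[q]^n=\left(\bigcup_{i\in[N]}S_i\right)\cup S_{error}$ such that for each $i\in[N]$, the density $\mu$ conditioned on $S_i$ is a $10t$-CBD distribution, and $\mu(S_{error})\le q^{-t}$.
   Context: Logarithms base 2. A density on $[q]^n$ is $\mu\ge0$ with uniform average $1$; $X\sim\mu$ means $\Pr[X=x]=\mu(x)q^{-n}$; $H_\infty(\mu)=\min_x\log(q^n/\mu(x))$; for a random variable $Z$, $H_\infty(Z)=\min_z\log(1/\Pr[Z=z])$. $\mu(S)=\Pr_{X\sim\mu}[X\in S]$, and $\mu$ conditioned on $S$ is the distribution of $X\sim\mu$ conditioned on $X\in S$. $X_I$ is the projection onto coordinates $I\subseteq[n]$. A random variable $X$ on $[q]^n$ is $d$-CBD if there is $I\subseteq[n]$, $|I|\le d$, with $X_I$ constant and $H_\infty(X_J)\ge0.8\log q\cdot|J|$ for every $J\subseteq[n]\setminus I$. *)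

theory Defs
  imports Complex_Main "HOL-Library.FuncSet"
begin

definition cube :: "nat \<Rightarrow> nat \<Rightarrow> (nat \<Rightarrow> nat) set" where
  "cube q n = PiE {..<n} (\<lambda>_. {..<q})"

text \<open>A density: nonnegative with uniform average 1.\<close>
definition is_density :: "nat \<Rightarrow> nat \<Rightarrow> ((nat \<Rightarrow> nat) \<Rightarrow> real) \<Rightarrow> bool" where
  "is_density q n \<mu> \<longleftrightarrow> (\<forall>x\<in>cube q n. 0 \<le> \<mu> x) \<and> (\<Sum>x\<in>cube q n. \<mu> x) = real q ^ n"

text \<open>Min-entropy of a density: min over x of log(q^n / mu(x)); points with mu(x)=0 contribute +infinity,
  so the minimum is taken over the support.\<close>
definition dens_Hinf :: "nat \<Rightarrow> nat \<Rightarrow> ((nat \<Rightarrow> nat) \<Rightarrow> real) \<Rightarrow> real" where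
  "dens_Hinf q n \<mu> = Min {log 2 (real q ^ n / \<mu> x) | x. x \<in> cube q n \<and> 0 < \<mu> x}"

text \<open>mu(S) = Pr_{X ~ mu}[X in S], where Pr[X = x] = mu(x) q^{-n}.\<close>
definition dens_measure :: "nat \<Rightarrow> nat \<Rightarrow> ((nat \<Rightarrow> nat) \<Rightarrow> real) \<Rightarrow> (nat \<Rightarrow> nat) set \<Rightarrow> real" where
  "dens_measure q n \<mu> S = (\<Sum>x\<in>cube q n \<inter> S. \<mu> x) / real q ^ n"

text \<open>Probability mass function of mu conditioned on S (a random variable on [q]^n is
  represented by its probability mass function on cube q n).\<close>
definition cond_dist :: "nat \<Rightarrow> nat \<Rightarrow> ((nat \<Rightarrow> nat) \<Rightarrow> real) \<Rightarrow> (nat \<Rightarrow> nat) set \<Rightarrow> (nat \<Rightarrow> nat) \<Rightarrow> real" where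
  "cond_dist q n \<mu> S = (\<lambda>x. if x \<in> cube q n \<inter> S then (\<mu> x / real q ^ n) / dens_measure q n \<mu> S else 0)"

definition proj_prob :: "nat \<Rightarrow> nat \<Rightarrow> ((nat \<Rightarrow> nat) \<Rightarrow> real) \<Rightarrow> nat set \<Rightarrow> (nat \<Rightarrow> nat) \<Rightarrow> real" where
  "proj_prob q n P J z = (\<Sum>x\<in>{x\<in>cube q n. restrict x J = z}. P x)"

definition proj_Hinf :: "nat \<Rightarrow> nat \<Rightarrow> ((nat \<Rightarrow> nat) \<Rightarrow> real) \<Rightarrow> nat set \<Rightarrow> real" where
  "proj_Hinf q n P J = Min {log 2 (1 / proj_prob q n P J z) | z. z \<in> (\<lambda>x. restrict x J) ` {x\<in>cube q n. 0 < P x}}"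

definition is_CBD :: "nat \<Rightarrow> nat \<Rightarrow> real \<Rightarrow> ((nat \<Rightarrow> nat) \<Rightarrow> real) \<Rightarrow> bool" where
  "is_CBD q n d P \<longleftrightarrow> (\<exists>I\<subseteq>{..<n}. real (card I) \<le> d
      \<and> (\<exists>c. \<forall>x\<in>cube q n. 0 < P x \<longrightarrow> restrict x I = c)
      \<and> (\<forall>J\<subseteq>{..<n} - I. proj_Hinf q n P J \<ge> 0.8 * log 2 (real q) * real (card J)))"

end

theory Submission
  imports Defs
begin

lemma finite_cube[simp]: "finite (cube q n)"
  unfolding cube_def by (simp add: finite_PiE)

lemma card_fixed_le:
  assumes "I \<subseteq> {..<n}"
  shows "card {x\<in>cube q n. restrict x I = \<alpha>} \<le> q ^ (n - card I)"
proof -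
  let ?A = "{x\<in>cube q n. restrict x I = \<alpha>}"
  let ?B = "PiE ({..<n} - I) (\<lambda>_. {..<q})"
  have inj: "inj_on (\<lambda>x. restrict x ({..<n} - I)) ?A"
  proof (rule inj_onI)
    fix x y assume x: "x \<in> ?A" and y: "y \<in> ?A" and e: "restrict x ({..<n} - I) = restrict y ({..<n} - I)"
    show "x = y"
    proof
      fix i
      show "x i = y i"
      proof (cases "i < n")
        case True
        show ?thesis
        proof (cases "i \<in> I")
          case True
          then have "restrict x I i = restrict y I i" using x y by simp
          then show ?thesis using True by simp
        next
          case False
          then have "restrict x ({..<n} - I) i = restrict y ({..<n} - I) i" using e by simp
          then show ?thesis using False \<open>i<n\<close> by simp
        qed
      next
        case False
        then show ?thesis using x y unfolding cube_def by (auto simp: PiE_def extensional_def)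
      qed
    qed
  qed
  have img: "(\<lambda>x. restrict x ({..<n} - I)) ` ?A \<subseteq> ?B"
    unfolding cube_def by (auto simp: PiE_def Pi_def)
  have "card ?A \<le> card ?B"
    using card_inj_on_le[OF inj img] by (simp add: finite_PiE)
  also have "card ?B = q ^ (n - card I)"
    using assms by (simp add: card_PiE card_Diff_subset finite_subset)
  finally show ?thesis .
qed

context
  fixes q n :: nat and t :: real and \<mu> :: "(nat \<Rightarrow> nat) \<Rightarrow> real"
  assumes q2: "q \<ge> 2"
    and dens: "is_density q n \<mu>"
    and hinf: "dens_Hinf q n \<mu> \<ge> (real n - t) * log 2 (real q)"
begin

lemma nonneg: "x \<in> cube q n \<Longrightarrow> 0 \<le> \<mu> x"
  using dens by (simp add: is_density_def)

lemma qpos: "0 < real q ^ n" using q2 by simp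

lemma m_nonneg: "0 \<le> dens_measure q n \<mu> A"
  unfolding dens_measure_def using qpos by (auto intro!: sum_nonneg divide_nonneg_pos nonneg)

lemma m_mono: "A \<subseteq> B \<Longrightarrow> dens_measure q n \<mu> A \<le> dens_measure q n \<mu> B"
  unfolding dens_measure_def using qpos
  by (intro divide_right_mono sum_mono2) (auto intro: nonneg)

lemma m_pos_ex: assumes "0 < dens_measure q n \<mu> A" shows "\<exists>x\<in>cube q n \<inter> A. 0 < \<mu> x"
proof (rule ccontr)
  assume "\<not> ?thesis"
  then have "(\<Sum>x\<in>cube q n \<inter> A. \<mu> x) \<le> 0" by (intro sum_nonpos) (auto simp: not_less)
  then have "(\<Sum>x\<in>cube q n \<inter> A. \<mu> x) / real q ^ n \<le> 0" using qpos by (rule divide_nonpos_pos)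
  then show False using assms unfolding dens_measure_def by linarith
qed

lemma m_ge_pt: assumes "x \<in> cube q n" "x \<in> A" shows "\<mu> x / real q ^ n \<le> dens_measure q n \<mu> A"
  unfolding dens_measure_def using assms qpos
  by (intro divide_right_mono member_le_sum) (auto intro: nonneg)

lemma mu_le: assumes x: "x \<in> cube q n" shows "\<mu> x \<le> real q powr t"
proof (cases "0 < \<mu> x")
  case False
  then have "\<mu> x \<le> 0" by simp
  moreover have "0 \<le> real q powr t" by simp
  ultimately show ?thesis by linarith
next
  case True
  have q1: "1 < real q" using q2 by simp
  have "dens_Hinf q n \<mu> \<le> log 2 (real q ^ n / \<mu> x)"
    unfolding dens_Hinf_def
    by (rule Min_le) (use x True in auto)
  with hinf have "(real n - t) * log 2 (real q) \<le> log 2 (real q ^ n / \<mu> x)" by simp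
  moreover have "(real n - t) * log 2 (real q) = log 2 (real q powr (real n - t))"
    using q1 by (simp add: log_powr)
  ultimately have "log 2 (real q powr (real n - t)) \<le> log 2 (real q ^ n / \<mu> x)" by simp
  then have "real q powr (real n - t) \<le> real q ^ n / \<mu> x"
    using True qpos q1 by (subst (asm) log_le_cancel_iff) auto
  then have "\<mu> x * real q powr (real n - t) \<le> real q ^ n" using True by (simp add: field_simps)
  moreover have "real q ^ n = real q powr t * real q powr (real n - t)"
    using q1 by (simp add: powr_add[symmetric] powr_realpow)
  ultimately have "\<mu> x * real q powr (real n - t) \<le> real q powr t * real q powr (real n - t)" by simp
  moreover have "0 < real q powr (real n - t)" using q1 by simp
  ultimately show ?thesis by (rule mult_right_le_imp_le) 
qed

lemma proj_cond:
  "proj_prob q n (cond_dist q n \<mu> S) J z =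
     dens_measure q n \<mu> {x\<in>S. restrict x J = z} / dens_measure q n \<mu> S"
proof -
  have "proj_prob q n (cond_dist q n \<mu> S) J z =
     (\<Sum>x\<in>{x\<in>{x\<in>cube q n. restrict x J = z}. x \<in> cube q n \<inter> S}. \<mu> x / real q ^ n / dens_measure q n \<mu> S)"
    unfolding proj_prob_def cond_dist_def by (subst sum.inter_filter) auto
  also have "{x\<in>{x\<in>cube q n. restrict x J = z}. x \<in> cube q n \<inter> S} = cube q n \<inter> {x\<in>S. restrict x J = z}"
    by auto
  finally show ?thesis unfolding dens_measure_def[of _ _ _ "{x\<in>S. restrict x J = z}"]
    by (simp add: sum_divide_distrib)
qed

lemma cbd_crit:
  assumes mS: "0 < dens_measure q n \<mu> S"
    and const: "\<forall>x\<in>S. restrict x I = \<alpha>"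
    and I: "I \<subseteq> {..<n}" and cI: "real (card I) \<le> d"
    and bnd: "\<And>J y. J \<subseteq> {..<n} - I \<Longrightarrow> y \<in> S \<Longrightarrow>
       dens_measure q n \<mu> {x\<in>S. restrict x J = restrict y J} \<le> real q powr (- 0.8 * real (card J)) * dens_measure q n \<mu> S"
  shows "is_CBD q n d (cond_dist q n \<mu> S)"
proof -
  let ?P = "cond_dist q n \<mu> S"
  have q1: "1 < real q" using q2 by simp
  have supp: "x \<in> cube q n \<and> x \<in> S \<and> 0 < \<mu> x" if "0 < ?P x" for x
    using that mS qpos unfolding cond_dist_def
    by (auto split: if_splits simp: zero_less_divide_iff dest: nonneg)
  obtain x0 where x0: "x0 \<in> cube q n \<inter> S" "0 < \<mu> x0" using m_pos_ex[OF mS] by blast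
  have Px0: "0 < ?P x0" using x0 mS qpos unfolding cond_dist_def by simp
  show ?thesis
    unfolding is_CBD_def
  proof (intro exI conjI ballI allI impI)
    show "I \<subseteq> {..<n}" by fact
    show "real (card I) \<le> d" by fact
    show "restrict x I = \<alpha>" if "x \<in> cube q n" "0 < ?P x" for x
      using supp[OF that(2)] const by auto
    fix J assume J: "J \<subseteq> {..<n} - I"
    let ?A = "{log 2 (1 / proj_prob q n ?P J z) | z. z \<in> (\<lambda>x. restrict x J) ` {x\<in>cube q n. 0 < ?P x}}"
    have fin: "finite ?A" by simp
    have ne: "?A \<noteq> {}" using x0 Px0 by auto
    have "\<forall>a\<in>?A. 0.8 * log 2 (real q) * real (card J) \<le> a"
    proof
      fix a assume "a \<in> ?A"
      then obtain y where y: "y \<in> cube q n" "0 < ?P y" and a: "a = log 2 (1 / proj_prob q n ?P J (restrict y J))"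
        by auto
      have yS: "y \<in> S" "0 < \<mu> y" using supp[OF y(2)] by auto
      let ?p = "proj_prob q n ?P J (restrict y J)"
      have pe: "?p = dens_measure q n \<mu> {x\<in>S. restrict x J = restrict y J} / dens_measure q n \<mu> S"
        by (rule proj_cond)
      have "0 < \<mu> y / real q ^ n" using yS qpos by simp
      also have "\<dots> \<le> dens_measure q n \<mu> {x\<in>S. restrict x J = restrict y J}"
        by (rule m_ge_pt) (use y yS in auto)
      finally have ppos: "0 < ?p" using pe mS by simp
      have ple: "?p \<le> real q powr (- 0.8 * real (card J))"
        using pe bnd[OF J yS(1)] mS by (simp add: divide_le_eq)
      have "real q powr (0.8 * real (card J)) \<le> 1 / ?p"
        using ple ppos q1 by (simp add: powr_minus field_simps)
      then have "log 2 (real q powr (0.8 * real (card J))) \<le> log 2 (1 / ?p)"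
        using ppos q1 by (subst log_le_cancel_iff) auto
      then show "0.8 * log 2 (real q) * real (card J) \<le> a"
        using q1 a by (simp add: log_powr mult_ac)
    qed
    then show "0.8 * log 2 (real q) * real (card J) \<le> proj_Hinf q n ?P J"
      unfolding proj_Hinf_def using Min_ge_iff[OF fin ne] by blast
  qed
qed

lemma main:
  "R \<subseteq> cube q n \<Longrightarrow> \<exists>(N::nat) (S :: nat \<Rightarrow> (nat \<Rightarrow> nat) set) Serr.
           (\<Union>i<N. S i) \<union> Serr = R
         \<and> (\<forall>i<N. \<forall>j<N. i \<noteq> j \<longrightarrow> S i \<inter> S j = {})
         \<and> (\<forall>i<N. S i \<inter> Serr = {})
         \<and> (\<forall>i<N. 0 < dens_measure q n \<mu> (S i)
                  \<and> is_CBD q n (10 * t) (cond_dist q n \<mu> (S i)))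
         \<and> dens_measure q n \<mu> Serr \<le> real q powr (- t)"
proof (induction "card R" arbitrary: R rule: less_induct)
  case less
  have q1: "1 < real q" using q2 by simp
  have finR: "finite R" using less.prems finite_subset finite_cube by blast
  show ?case
  proof (cases "dens_measure q n \<mu> R \<le> real q powr (- t)")
    case True
    then show ?thesis by (intro exI[of _ 0] exI[of _ R]) auto
  next
    case False
    let ?m = "dens_measure q n \<mu>"
    have mR: "real q powr (- t) < ?m R" using False by simp
    have "0 < real q powr (- t)" using q2 by simp
    then have mRpos: "0 < ?m R" using mR by linarith
    define F where "F = {K. K \<subseteq> {..<n} \<and> (\<exists>\<beta>. real q powr (- 0.8 * real (card K)) * ?m R \<le> ?m {x\<in>R. restrict x K = \<beta>})}"
    have "{} \<in> F" unfolding F_def using q2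
      by (auto intro!: exI[of _ "\<lambda>_. undefined"] simp: restrict_def)
    have finF: "finite F" unfolding F_def by (rule finite_subset[of _ "Pow {..<n}"]) auto
    have "Max (card ` F) \<in> card ` F" using \<open>{} \<in> F\<close> finF by (intro Max_in) auto
    then obtain I where IF: "I \<in> F" and Imax: "card I = Max (card ` F)" by auto
    have maxI: "card K \<le> card I" if "K \<in> F" for K
      using that finF Imax by simp
    obtain \<alpha> where In: "I \<subseteq> {..<n}" and
      alpha: "real q powr (- 0.8 * real (card I)) * ?m R \<le> ?m {x\<in>R. restrict x I = \<alpha>}"
      using IF unfolding F_def by auto
    define S1 where "S1 = {x\<in>R. restrict x I = \<alpha>}"
    have "0 < real q powr (- 0.8 * real (card I))" using q2 by simp
    then have "0 < real q powr (- 0.8 * real (card I)) * ?m R" using mRpos by (rule mult_pos_pos)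
    then have mS1: "0 < ?m S1" unfolding S1_def using alpha by linarith
    have "S1 \<noteq> {}"
    proof
      assume "S1 = {}"
      then have "?m S1 = 0" by (simp add: dens_measure_def)
      with mS1 show False by simp
    qed
    have S1R: "S1 \<subseteq> R" unfolding S1_def by auto
    define R' where "R' = R - S1"
    have cR': "card R' < card R" unfolding R'_def using \<open>S1 \<noteq> {}\<close> S1R finR
      by (intro psubset_card_mono) (auto simp: finite_subset)
    have R'c: "R' \<subseteq> cube q n" using less.prems unfolding R'_def by auto
    from less.hyps[OF cR' R'c] obtain N :: nat and S :: "nat \<Rightarrow> (nat \<Rightarrow> nat) set" and E where
      U: "(\<Union>i<N. S i) \<union> E = R'"
      and D1: "\<forall>i<N. \<forall>j<N. i \<noteq> j \<longrightarrow> S i \<inter> S j = {}"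
      and D2: "\<forall>i<N. S i \<inter> E = {}"
      and C: "\<forall>i<N. 0 < ?m (S i) \<and> is_CBD q n (10 * t) (cond_dist q n \<mu> (S i))"
      and EE: "?m E \<le> real q powr (- t)"
      by blast
    have cI: "real (card I) \<le> 10 * t"
    proof -
      have "?m S1 \<le> (\<Sum>x\<in>cube q n \<inter> S1. real q powr t) / real q ^ n"
        unfolding dens_measure_def using qpos by (intro divide_right_mono sum_mono mu_le) auto
      also have "\<dots> = real (card (cube q n \<inter> S1)) * real q powr t / real q ^ n" by simp
      also have "\<dots> \<le> real (q ^ (n - card I)) * real q powr t / real q ^ n"
      proof -
        have "card (cube q n \<inter> S1) \<le> card {x\<in>cube q n. restrict x I = \<alpha>}"
          unfolding S1_def by (intro card_mono) auto
        also have "\<dots> \<le> q ^ (n - card I)" by (rule card_fixed_le[OF In])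
        finally show ?thesis using qpos
          by (intro divide_right_mono mult_right_mono) auto
      qed
      also have "\<dots> = real q powr (t - real (card I))"
      proof -
        have cn: "card I \<le> n" using In by (metis card_lessThan card_mono finite_lessThan)
        have e1: "real (q ^ (n - card I)) = real q powr (real n - real (card I))"
        proof -
          have "real q powr real (n - card I) = real q ^ (n - card I)"
            using q1 by (intro powr_realpow) simp
          then show ?thesis using cn by (simp add: of_nat_diff)
        qed
        have e2: "real q ^ n = real q powr real n" using q1 by (simp add: powr_realpow)
        have "real (q ^ (n - card I)) * real q powr t / real q ^ n
              = real q powr (real n - real (card I)) * real q powr t / real q powr real n"
          by (simp only: e1 e2)
        also have "\<dots> = real q powr (real n - real (card I) + t - real n)"
          by (simp only: powr_add powr_diff)
        also have "\<dots> = real q powr (t - real (card I))"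
          by (rule arg_cong[where f="\<lambda>a. real q powr a"]) simp
        finally show ?thesis .
      qed
      finally have up: "?m S1 \<le> real q powr (t - real (card I))" .
      have "real q powr (- 0.8 * real (card I) - t) = real q powr (- 0.8 * real (card I)) * real q powr (- t)"
        by (simp add: powr_add[symmetric])
      also have "\<dots> < real q powr (- 0.8 * real (card I)) * ?m R"
        using mR q1 by (intro mult_strict_left_mono) auto
      also have "\<dots> \<le> real q powr (t - real (card I))" using alpha up unfolding S1_def by simp
      finally have "- 0.8 * real (card I) - t < t - real (card I)" using q1 by simp
      then show ?thesis by simp
    qed
    have CB: "is_CBD q n (10 * t) (cond_dist q n \<mu> S1)"
    proof (rule cbd_crit[OF mS1 _ In cI])
      show "\<forall>x\<in>S1. restrict x I = \<alpha>" unfolding S1_def by auto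
      fix J y assume J: "J \<subseteq> {..<n} - I" and y: "y \<in> S1"
      show "?m {x\<in>S1. restrict x J = restrict y J} \<le> real q powr (- 0.8 * real (card J)) * ?m S1"
      proof (cases "J = {}")
        case True
        then have "{x\<in>S1. restrict x J = restrict y J} = S1" by auto
        then show ?thesis using True q2 by simp
      next
        case False
        have finJ: "finite J" using J finite_subset by auto
        have dis: "I \<inter> J = {}" using J by auto
        have cU: "card (I \<union> J) = card I + card J"
          using finJ In dis by (simp add: card_Un_disjoint finite_subset)
        have "card J > 0" using False finJ by auto
        then have "I \<union> J \<notin> F" using maxI cU by fastforce
        moreover have "I \<union> J \<subseteq> {..<n}" using J In by auto
        ultimately have lt: "?m {x\<in>R. restrict x (I \<union> J) = restrict y (I \<union> J)} <
           real q powr (- 0.8 * real (card (I \<union> J))) * ?m R"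
          unfolding F_def by (auto simp: not_le)
        have seteq: "{x\<in>S1. restrict x J = restrict y J} = {x\<in>R. restrict x (I \<union> J) = restrict y (I \<union> J)}"
        proof -
          have yI: "restrict y I = \<alpha>" using y unfolding S1_def by auto
          have "restrict x (I \<union> J) = restrict y (I \<union> J) \<longleftrightarrow>
                restrict x I = restrict y I \<and> restrict x J = restrict y J" for x
            unfolding fun_eq_iff restrict_def by auto
          then show ?thesis using yI unfolding S1_def by auto
        qed
        have "real q powr (- 0.8 * real (card (I \<union> J))) * ?m R =
              real q powr (- 0.8 * real (card J)) * (real q powr (- 0.8 * real (card I)) * ?m R)"
        proof -
          have "- 0.8 * real (card (I \<union> J)) = - 0.8 * real (card J) + - 0.8 * real (card I)"
            using cU by (simp add: field_simps)
          then have "real q powr (- 0.8 * real (card (I \<union> J))) =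
                real q powr (- 0.8 * real (card J)) * real q powr (- 0.8 * real (card I))"
            by (simp only: powr_add)
          then show ?thesis by (simp add: mult.assoc)
        qed
        also have "\<dots> \<le> real q powr (- 0.8 * real (card J)) * ?m S1"
          using alpha unfolding S1_def by (intro mult_left_mono) auto
        finally show ?thesis using lt seteq by simp
      qed
    qed
    let ?S = "S(N := S1)"
    have SR': "S i \<subseteq> R'" if "i < N" for i using U that by auto
    have ER': "E \<subseteq> R'" using U by auto
    have dS1: "S1 \<inter> R' = {}" unfolding R'_def by auto
    show ?thesis
    proof (intro exI[of _ "Suc N"] exI[of _ ?S] exI[of _ E] conjI allI impI)
      have "(\<Union>i<Suc N. ?S i) = (\<Union>i<N. S i) \<union> S1"
        by (auto simp: lessThan_Suc)
      then show "(\<Union>i<Suc N. ?S i) \<union> E = R" using U S1R unfolding R'_def by auto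
      show "?m E \<le> real q powr (- t)" by fact
      fix i assume i: "i < Suc N"
      show "0 < ?m (?S i)" using C mS1 i by (cases "i = N") auto
      show "is_CBD q n (10 * t) (cond_dist q n \<mu> (?S i))" using C CB i by (cases "i = N") auto
      show "?S i \<inter> E = {}" using D2 dS1 ER' i by (cases "i = N") auto
      fix j assume j: "j < Suc N" "i \<noteq> j"
      show "?S i \<inter> ?S j = {}"
      proof (cases "i = N")
        case True
        then have "j < N" using j by auto
        then show ?thesis using True SR'[of j] dS1 j by auto
      next
        case False
        then have iN: "i < N" using i by auto
        show ?thesis
        proof (cases "j = N")
          case True
          then show ?thesis using False SR'[of i] iN dS1 by auto
        next
          case False
          then have "j < N" using j by auto
          then show ?thesis using D1 iN j \<open>i \<noteq> N\<close> False by auto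
        qed
      qed
    qed
  qed
qed

end

theorem lemma6p1:
  fixes q n :: nat and t :: real and \<mu> :: "(nat \<Rightarrow> nat) \<Rightarrow> real"
  assumes "q \<ge> 2"
    and "is_density q n \<mu>"
    and "dens_Hinf q n \<mu> \<ge> (real n - t) * log 2 (real q)"
  shows "\<exists>(N::nat) (S :: nat \<Rightarrow> (nat \<Rightarrow> nat) set) Serr.
           (\<Union>i<N. S i) \<union> Serr = cube q n
         \<and> (\<forall>i<N. \<forall>j<N. i \<noteq> j \<longrightarrow> S i \<inter> S j = {})
         \<and> (\<forall>i<N. S i \<inter> Serr = {})
         \<and> (\<forall>i<N. 0 < dens_measure q n \<mu> (S i)
                  \<and> is_CBD q n (10 * t) (cond_dist q n \<mu> (S i)))
         \<and> dens_measure q n \<mu> Serr \<le> real q powr (- t)"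
  using main[OF assms, of "cube q n"] by simp

end
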